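(* Let $F$ be a (randomized) mechanism for the multi-agent kidney exchange game, and for each agent $i$ let $x_i$ be the random variable giving the utility of agent $i$ in $F$. Then there exists a mechanism $F^*$ such that for every input graph and every agent $i$, $\mathrm{Var}(y_i)\le \frac{\mathrm{Var}(x_i)}{2}+1$ and $E[y_i]=E[x_i]$, where $y_i$ is the random variable giving the utility of agent $i$ in $F^*$.
   Context: An instance of the multi-agent kidney exchange game is a graph $G=(V,E)$ together with a partition $V=V_1\cup\dots\cup V_m$ of its vertices among $m$ agents. A mechanism maps each instance to a (possibly random) matching of $G$. The utility of agent $i$ with respect to a matching $M$ is the number of vertices of $V_i$ covered by $M$; the utility of agent $i$ in a mechanism is this quantity for the (random) matching output by the mechanism. *)

theory Defs
  imports "HOL-Probability.Probability"
begin

text \<open>An instance of the multi-agent kidney exchange game: a finite simple undirected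
graph (vertex set, edges as 2-element vertex sets) together with a partition of the
vertex set among agents 0, ..., m-1 (agent i owns the vertex set parts i).\<close>

record 'v kx_instance =
  verts :: "'v set"
  edges :: "'v set set"
  agents :: nat
  parts :: "nat \<Rightarrow> 'v set"

definition valid_instance :: "'v kx_instance \<Rightarrow> bool" where
  "valid_instance I \<longleftrightarrow>
     finite (verts I) \<and>
     edges I \<subseteq> {{u, v} | u v. u \<in> verts I \<and> v \<in> verts I \<and> u \<noteq> v} \<and>
     (\<Union>i<agents I. parts I i) = verts I \<and>
     disjoint_family_on (parts I) {..<agents I}"

definition is_matching :: "'v set set \<Rightarrow> 'v set set \<Rightarrow> bool" where
  "is_matching E M \<longleftrightarrow> M \<subseteq> E \<and> (\<forall>e\<in>M. \<forall>f\<in>M. e \<noteq> f \<longrightarrow> e \<inter> f = {})"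

definition mechanism :: "('v kx_instance \<Rightarrow> 'v set set pmf) \<Rightarrow> bool" where
  "mechanism F \<longleftrightarrow>
     (\<forall>I. valid_instance I \<longrightarrow> (\<forall>M\<in>set_pmf (F I). is_matching (edges I) M))"

definition utility :: "'v kx_instance \<Rightarrow> nat \<Rightarrow> 'v set set \<Rightarrow> real" where
  "utility I i M = real (card (parts I i \<inter> \<Union>M))"

end

theory Submission
  imports Defs
begin

lemma merge_bound:
  fixes x y :: "nat \<Rightarrow> int"
  assumes "i < m" "x i \<noteq> 0" "y i \<noteq> 0" "(\<Sum>j<m. \<bar>x j\<bar>) \<le> 2" "(\<Sum>j<m. \<bar>y j\<bar>) \<le> 2"
    and c: "c = (if x i * y i > 0 then -1 else 1)"
  shows "(\<Sum>j<m. \<bar>x j + c * y j\<bar>) \<le> 2"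
proof -
  have pw: "\<bar>x j + c * y j\<bar> \<le> \<bar>x j\<bar> + \<bar>y j\<bar> - (if j = i then 2 else 0)" for j
  proof (cases "j = i")
    case True
    have "\<bar>x i + c * y i\<bar> \<le> \<bar>x i\<bar> + \<bar>y i\<bar> - 2"
    proof (cases "x i * y i > 0")
      case True
      then have "(x i > 0 \<and> y i > 0) \<or> (x i < 0 \<and> y i < 0)"
        by (metis mult_pos_neg mult_neg_pos not_less_iff_gr_or_eq mult_eq_0_iff less_asym assms(2,3)) 
      then show ?thesis using True c by auto
    next
      case False
      then have "(x i > 0 \<and> y i < 0) \<or> (x i < 0 \<and> y i > 0)"
        using assms(2,3) by (metis linorder_neqE_linordered_idom mult_neg_neg mult_pos_pos)
      then show ?thesis using False c by auto
    qed
    then show ?thesis using True by simp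
  next
    case False
    have "\<bar>c\<bar> = 1" using c by auto
    then have "\<bar>c * y j\<bar> = \<bar>y j\<bar>" by (simp add: abs_mult)
    then show ?thesis using False by (simp add: abs_triangle_ineq order_trans[OF abs_triangle_ineq])
  qed
  have "(\<Sum>j<m. \<bar>x j + c * y j\<bar>) \<le> (\<Sum>j<m. \<bar>x j\<bar> + \<bar>y j\<bar> - (if j = i then 2 else 0))"
    by (rule sum_mono) (rule pw)
  also have "\<dots> = (\<Sum>j<m. \<bar>x j\<bar>) + (\<Sum>j<m. \<bar>y j\<bar>) - 2"
    using assms(1) by (simp add: sum.distrib sum_subtractf)
  finally show ?thesis using assms by linarith
qed

lemma disc:
  fixes a :: "'b \<Rightarrow> nat \<Rightarrow> int"
  assumes "finite P" "\<forall>B\<in>P. (\<Sum>i<m. \<bar>a B i\<bar>) \<le> 2"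
  shows "\<exists>\<epsilon>. (\<forall>B. \<epsilon> B = 1 \<or> \<epsilon> B = -1) \<and> (\<forall>i<m. \<bar>\<Sum>B\<in>P. \<epsilon> B * a B i\<bar> \<le> 2)"
  using assms
proof (induction "card P" arbitrary: P a rule: less_induct)
  case less
  show ?case
  proof (cases "\<exists>k\<in>P. \<exists>l\<in>P. k \<noteq> l \<and> (\<exists>i<m. a k i \<noteq> 0 \<and> a l i \<noteq> 0)")
    case True
    then obtain k l i where kl: "k \<in> P" "l \<in> P" "k \<noteq> l" "i < m" "a k i \<noteq> 0" "a l i \<noteq> 0" by blast
    define c :: int where "c = (if a k i * a l i > 0 then -1 else 1)"
    define a' where "a' = a(k := (\<lambda>j. a k j + c * a l j))"
    have c1: "c = 1 \<or> c = -1" unfolding c_def by auto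
    have "card (P - {l}) < card P" using kl less.prems(1) by (metis card_Diff1_less)
    moreover have "finite (P - {l})" using less.prems(1) by simp
    moreover have "\<forall>B\<in>P - {l}. (\<Sum>i<m. \<bar>a' B i\<bar>) \<le> 2"
    proof
      fix B assume B: "B \<in> P - {l}"
      show "(\<Sum>i<m. \<bar>a' B i\<bar>) \<le> 2"
      proof (cases "B = k")
        case True
        have "(\<Sum>j<m. \<bar>a k j + c * a l j\<bar>) \<le> 2"
          using merge_bound[of i m "a k" "a l" c] kl less.prems(2) c_def by blast
        then show ?thesis unfolding a'_def using True by simp
      next
        case False
        then show ?thesis unfolding a'_def using less.prems(2) B by simp
      qed
    qed
    ultimately obtain \<epsilon>' where e': "\<forall>B. \<epsilon>' B = 1 \<or> \<epsilon>' B = -1"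
      "\<forall>i<m. \<bar>\<Sum>B\<in>P - {l}. \<epsilon>' B * a' B i\<bar> \<le> 2"
      using less.hyps by blast
    define \<epsilon> where "\<epsilon> = \<epsilon>'(l := c * \<epsilon>' k)"
    have "\<forall>B. \<epsilon> B = 1 \<or> \<epsilon> B = -1" unfolding \<epsilon>_def using e'(1) c1 by auto
    moreover have "\<forall>j<m. \<bar>\<Sum>B\<in>P. \<epsilon> B * a B j\<bar> \<le> 2"
    proof (intro allI impI)
      fix j assume j: "j < m"
      have fin: "finite (P - {l})" using less.prems(1) by simp
      have "(\<Sum>B\<in>P. \<epsilon> B * a B j) = \<epsilon> l * a l j + (\<Sum>B\<in>P - {l}. \<epsilon> B * a B j)"
        using less.prems(1) kl(2) by (simp add: sum.remove)
      also have "(\<Sum>B\<in>P - {l}. \<epsilon> B * a B j) = (\<Sum>B\<in>P - {l}. \<epsilon>' B * a B j)"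
        unfolding \<epsilon>_def by (rule sum.cong) auto
      also have "\<dots> = \<epsilon>' k * a k j + (\<Sum>B\<in>P - {l} - {k}. \<epsilon>' B * a B j)"
        using fin kl by (simp add: sum.remove)
      finally have 1: "(\<Sum>B\<in>P. \<epsilon> B * a B j) = c * \<epsilon>' k * a l j + \<epsilon>' k * a k j + (\<Sum>B\<in>P - {l} - {k}. \<epsilon>' B * a B j)"
        unfolding \<epsilon>_def by simp
      have "(\<Sum>B\<in>P - {l}. \<epsilon>' B * a' B j) = \<epsilon>' k * a' k j + (\<Sum>B\<in>P - {l} - {k}. \<epsilon>' B * a' B j)"
        using fin kl by (simp add: sum.remove)
      also have "(\<Sum>B\<in>P - {l} - {k}. \<epsilon>' B * a' B j) = (\<Sum>B\<in>P - {l} - {k}. \<epsilon>' B * a B j)"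
        unfolding a'_def by (rule sum.cong) auto
      finally have 2: "(\<Sum>B\<in>P - {l}. \<epsilon>' B * a' B j) = \<epsilon>' k * (a k j + c * a l j) + (\<Sum>B\<in>P - {l} - {k}. \<epsilon>' B * a B j)"
        unfolding a'_def by simp
      have "(\<Sum>B\<in>P. \<epsilon> B * a B j) = (\<Sum>B\<in>P - {l}. \<epsilon>' B * a' B j)"
        unfolding 1 2 by (simp add: algebra_simps)
      then show "\<bar>\<Sum>B\<in>P. \<epsilon> B * a B j\<bar> \<le> 2" using e'(2) j by simp
    qed
    ultimately show ?thesis by blast
  next
    case False
    have "\<forall>i<m. \<bar>\<Sum>B\<in>P. 1 * a B i\<bar> \<le> 2"
    proof (intro allI impI)
      fix i assume i: "i < m"
      show "\<bar>\<Sum>B\<in>P. 1 * a B i\<bar> \<le> 2"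
      proof (cases "\<exists>B\<in>P. a B i \<noteq> 0")
        case True
        then obtain B0 where B0: "B0 \<in> P" "a B0 i \<noteq> 0" by blast
        have "(\<Sum>B\<in>P. 1 * a B i) = a B0 i + (\<Sum>B\<in>P - {B0}. a B i)"
          using less.prems(1) B0 by (simp add: sum.remove)
        also have "(\<Sum>B\<in>P - {B0}. a B i) = 0"
          using False B0 i by (intro sum.neutral) blast
        finally have "(\<Sum>B\<in>P. 1 * a B i) = a B0 i" by simp
        moreover have "\<bar>a B0 i\<bar> \<le> (\<Sum>j<m. \<bar>a B0 j\<bar>)"
          using i by (intro member_le_sum) auto
        moreover have "(\<Sum>j<m. \<bar>a B0 j\<bar>) \<le> 2" using less.prems(2) B0 by blast
        ultimately show ?thesis by simp
      next
        case False
        then show ?thesis by simp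
      qed
    qed
    then show ?thesis by (intro exI[of _ "\<lambda>_. 1"]) auto
  qed
qed

definition cnt :: "'v set set \<Rightarrow> 'v \<Rightarrow> int" where
  "cnt Y v = (\<Sum>f\<in>Y. if v \<in> f then 1 else 0)"

lemma cnt_matching:
  assumes "finite Z" "\<forall>e\<in>Z. \<forall>f\<in>Z. e \<noteq> f \<longrightarrow> e \<inter> f = {}"
  shows "cnt Z v = of_bool (v \<in> \<Union>Z)"
proof (cases "v \<in> \<Union>Z")
  case True
  then obtain f0 where f0: "f0 \<in> Z" "v \<in> f0" by blast
  have "cnt Z v = 1 + (\<Sum>f\<in>Z - {f0}. if v \<in> f then 1 else 0)"
    unfolding cnt_def using assms(1) f0 by (simp add: sum.remove)
  also have "(\<Sum>f\<in>Z - {f0}. if v \<in> f then 1 else (0::int)) = 0"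
    using assms(2) f0 by (intro sum.neutral) (auto simp: disjoint_iff)
  finally show ?thesis using True by simp
next
  case False
  then have "cnt Z v = 0" unfolding cnt_def by (intro sum.neutral) auto
  then show ?thesis using False by simp
qed

lemma cnt_union: "finite A \<Longrightarrow> finite B \<Longrightarrow> A \<inter> B = {} \<Longrightarrow> cnt (A \<union> B) v = cnt A v + cnt B v"
  unfolding cnt_def by (simp add: sum.union_disjoint)

locale mm =
  fixes E :: "'v set set" and M1 M2 :: "'v set set" and V :: "'v set"
  assumes finV: "finite V" and Esub: "\<forall>e\<in>E. e \<subseteq> V \<and> card e = 2"
    and m1: "is_matching E M1" and m2: "is_matching E M2"
begin

definition D where "D = (M1 - M2) \<union> (M2 - M1)"

definition dl :: "'v set set \<Rightarrow> 'v \<Rightarrow> int" where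
  "dl Y v = (\<Sum>f\<in>Y. if v \<in> f then (if f \<in> M1 then 1 else -1) else 0)"

definition L where "L Y = (\<Sum>v\<in>V. \<bar>dl Y v\<bar>)"

lemma finE: "finite E"
proof -
  have "E \<subseteq> Pow V" using Esub by blast
  then show ?thesis using finV by (meson finite_Pow_iff finite_subset)
qed

lemma DE: "D \<subseteq> E" using m1 m2 unfolding D_def is_matching_def by auto

lemma finD: "finite D" using DE finE finite_subset by blast

lemma edge_ne: "e \<in> E \<Longrightarrow> e \<noteq> {}" using Esub by (metis card.empty zero_neq_numeral)
lemma edge_fin: "e \<in> E \<Longrightarrow> finite e" using Esub finV by (meson finite_subset)

lemma dl_cnt: "finite Y \<Longrightarrow> dl Y v = cnt (Y \<inter> M1) v - cnt (Y - M1) v"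
proof -
  assume fY: "finite Y"
  have "dl Y v = (\<Sum>f\<in>Y \<inter> M1. if v \<in> f then (if f \<in> M1 then 1 else -1) else 0)
     + (\<Sum>f\<in>Y - M1. if v \<in> f then (if f \<in> M1 then 1 else -1) else 0)"
  proof -
    have "Y = (Y \<inter> M1) \<union> (Y - M1)" by blast
    moreover have "(Y \<inter> M1) \<inter> (Y - M1) = {}" by blast
    ultimately show ?thesis unfolding dl_def using fY
      sum.union_disjoint[of "Y \<inter> M1" "Y - M1" "\<lambda>f. if v \<in> f then (if f \<in> M1 then 1 else -1) else (0::int)"]
      by simp
  qed
  also have "(\<Sum>f\<in>Y \<inter> M1. if v \<in> f then (if f \<in> M1 then 1 else -1) else 0) = cnt (Y \<inter> M1) v"
    unfolding cnt_def by (rule sum.cong) auto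
  also have "(\<Sum>f\<in>Y - M1. if v \<in> f then (if f \<in> M1 then 1 else -1) else 0) = - cnt (Y - M1) v"
    unfolding cnt_def by (simp add: sum_negf[symmetric]) (rule sum.cong, auto)
  finally show ?thesis by simp
qed

lemma dl_exists:
  assumes "Y \<subseteq> D"
  shows "dl Y v = of_bool (\<exists>f\<in>Y \<inter> M1. v \<in> f) - of_bool (\<exists>f\<in>Y - M1. v \<in> f)"
proof -
  have fY: "finite Y" using assms finD finite_subset by blast
  have "\<forall>e\<in>Y \<inter> M1. \<forall>f\<in>Y \<inter> M1. e \<noteq> f \<longrightarrow> e \<inter> f = {}"
    using m1 unfolding is_matching_def by blast
  then have "cnt (Y \<inter> M1) v = of_bool (v \<in> \<Union>(Y \<inter> M1))"
    using fY by (intro cnt_matching) auto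
  moreover have "Y - M1 \<subseteq> M2" using assms unfolding D_def by blast
  then have "\<forall>e\<in>Y - M1. \<forall>f\<in>Y - M1. e \<noteq> f \<longrightarrow> e \<inter> f = {}"
    using m2 unfolding is_matching_def by blast
  then have "cnt (Y - M1) v = of_bool (v \<in> \<Union>(Y - M1))"
    using fY by (intro cnt_matching) auto
  ultimately show ?thesis using dl_cnt[OF fY] by auto
qed


lemma same_side:
  assumes "g \<in> D" "h \<in> D" "v \<in> g" "v \<in> h" "(g \<in> M1) = (h \<in> M1)"
  shows "g = h"
proof (cases "g \<in> M1")
  case True
  then show ?thesis using assms m1 unfolding is_matching_def by blast
next
  case False
  then have "g \<in> M2" "h \<in> M2" using assms unfolding D_def by auto
  then show ?thesis using assms m2 unfolding is_matching_def by blast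
qed

lemma dl_single: "dl {e} v = (if v \<in> e then (if e \<in> M1 then 1 else -1) else 0)"
  unfolding dl_def by simp

lemma abs_dl_single: "\<bar>dl {e} v\<bar> = (if v \<in> e then 1 else 0)"
  unfolding dl_single by auto

lemma L_single: assumes "e \<in> E" shows "L {e} = 2"
proof -
  have "L {e} = (\<Sum>v\<in>V. if v \<in> e then 1 else 0)" unfolding L_def abs_dl_single ..
  also have "\<dots> = int (card (V \<inter> e))"
    using finV by (simp add: sum.If_cases)
  also have "V \<inter> e = e" using Esub assms by blast
  finally show ?thesis using Esub assms by simp
qed

lemma components:
  assumes "finite X" "X \<subseteq> D"
  shows "\<exists>P. finite P \<and> \<Union>P = X \<and> (\<forall>B\<in>P. B \<noteq> {}) \<and>
     (\<forall>B\<in>P. \<forall>B'\<in>P. B \<noteq> B' \<longrightarrow> \<Union>B \<inter> \<Union>B' = {}) \<and> (\<forall>B\<in>P. L B \<le> 2)"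
  using assms
proof (induction X rule: finite_induct)
  case empty
  then show ?case by (intro exI[of _ "{}"]) auto
next
  case (insert e X)
  then obtain P where P: "finite P" "\<Union>P = X" "\<forall>B\<in>P. B \<noteq> {}"
     "\<forall>B\<in>P. \<forall>B'\<in>P. B \<noteq> B' \<longrightarrow> \<Union>B \<inter> \<Union>B' = {}" "\<forall>B\<in>P. L B \<le> 2" by auto
  have eD: "e \<in> D" using insert by auto
  have eE: "e \<in> E" using eD DE by auto
  have XD: "X \<subseteq> D" using insert by auto
  define T where "T = {B\<in>P. \<Union>B \<inter> e \<noteq> {}}"
  define NB where "NB = insert e (\<Union>T)"
  define P' where "P' = insert NB (P - T)"
  have TP: "T \<subseteq> P" unfolding T_def by auto
  have finT: "finite T" using TP P(1) finite_subset by blast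
  have finB: "\<forall>B\<in>P. finite B" using P(2) insert(1) by (meson Sup_upper finite_subset)
  have BD: "\<forall>B\<in>P. B \<subseteq> D" using P(2) XD by blast
  have edisj: "\<forall>B\<in>P. \<forall>B'\<in>P. B \<noteq> B' \<longrightarrow> B \<inter> B' = {}"
  proof (intro ballI impI)
    fix B B' assume "B \<in> P" "B' \<in> P" "B \<noteq> B'"
    then have d: "\<Union>B \<inter> \<Union>B' = {}" using P(4) by blast
    show "B \<inter> B' = {}"
    proof (rule ccontr)
      assume "B \<inter> B' \<noteq> {}"
      then obtain f where "f \<in> B" "f \<in> B'" by blast
      moreover have "f \<noteq> {}" using \<open>f \<in> B\<close> \<open>B \<in> P\<close> BD DE edge_ne by blast
      ultimately show False using d by blast
    qed
  qed
  have eT: "e \<notin> \<Union>T" using insert(2) P(2) TP by blast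
  have NBD: "NB \<subseteq> D" unfolding NB_def using eD TP BD by blast
  have finUT: "finite (\<Union>T)" using finT TP finB by blast
  have add: "dl NB v = dl {e} v + (\<Sum>B\<in>T. dl B v)" for v
  proof -
    have "dl NB v = dl {e} v + dl (\<Union>T) v"
      unfolding NB_def dl_def using eT finUT by (simp add: sum.insert)
    moreover have "dl (\<Union>T) v = (\<Sum>B\<in>T. dl B v)"
    proof -
      have "\<forall>A\<in>T. finite A" using TP finB by blast
      moreover have "\<forall>A\<in>T. \<forall>B\<in>T. A \<noteq> B \<longrightarrow> A \<inter> B = {}" using TP edisj by blast
      ultimately have "sum (\<lambda>f. if v \<in> f then (if f \<in> M1 then 1 else -1) else (0::int)) (\<Union>T)
          = (sum \<circ> sum) (\<lambda>f. if v \<in> f then (if f \<in> M1 then 1 else -1) else (0::int)) T"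
        by (rule sum.Union_disjoint)
      then show ?thesis unfolding dl_def by simp
    qed
    ultimately show ?thesis by simp
  qed
  have pw: "\<bar>dl NB v\<bar> + (if v \<in> e \<inter> \<Union>(\<Union>T) then 2 else 0)
        \<le> \<bar>dl {e} v\<bar> + (\<Sum>B\<in>T. \<bar>dl B v\<bar>)" for v
  proof (cases "v \<in> e \<inter> \<Union>(\<Union>T)")
    case False
    have h1: "\<bar>dl NB v\<bar> \<le> \<bar>dl {e} v\<bar> + \<bar>\<Sum>B\<in>T. dl B v\<bar>" unfolding add by (rule abs_triangle_ineq)
    have h2: "\<bar>\<Sum>B\<in>T. dl B v\<bar> \<le> (\<Sum>B\<in>T. \<bar>dl B v\<bar>)" by (rule sum_abs)
    from h1 h2 have "\<bar>dl NB v\<bar> \<le> \<bar>dl {e} v\<bar> + (\<Sum>B\<in>T. \<bar>dl B v\<bar>)" by linarith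
    then show ?thesis using False by (simp only: if_False if_not_P)
  next
    case True
    then obtain B0 f where B0: "B0 \<in> T" "f \<in> B0" "v \<in> f" "v \<in> e" by blast
    have B0P: "B0 \<in> P" using B0 TP by blast
    have fD: "f \<in> D" using B0P B0 BD by blast
    have fe: "f \<noteq> e" using B0 eT by blast
    have opp: "(f \<in> M1) = (e \<notin> M1)" using same_side[OF fD eD B0(3) B0(4)] fe by blast
    have B0D: "B0 \<subseteq> D" using B0P BD by blast
    have "dl B0 v = of_bool (\<exists>g\<in>B0 \<inter> M1. v \<in> g) - of_bool (\<exists>g\<in>B0 - M1. v \<in> g)"
      by (rule dl_exists[OF B0D])
    moreover have "\<not> (\<exists>g\<in>B0. v \<in> g \<and> (g \<in> M1) = (e \<in> M1))"
    proof
      assume "\<exists>g\<in>B0. v \<in> g \<and> (g \<in> M1) = (e \<in> M1)"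
      then obtain g where "g \<in> B0" "v \<in> g" "(g \<in> M1) = (e \<in> M1)" by blast
      then have "g = e" using same_side[of g e v] B0D eD B0(4) by blast
      then show False using \<open>g \<in> B0\<close> B0 eT by blast
    qed
    ultimately have a1: "\<bar>dl B0 v\<bar> = 1" using B0 opp by (cases "e \<in> M1") auto
    have "dl NB v = of_bool (\<exists>g\<in>NB \<inter> M1. v \<in> g) - of_bool (\<exists>g\<in>NB - M1. v \<in> g)"
      by (rule dl_exists[OF NBD])
    moreover have "f \<in> NB" "e \<in> NB" unfolding NB_def using B0 by auto
    ultimately have a0: "dl NB v = 0" using opp B0 by (cases "e \<in> M1") auto
    have a2: "\<bar>dl {e} v\<bar> = 1" using abs_dl_single B0 by simp
    have "\<bar>dl B0 v\<bar> \<le> (\<Sum>B\<in>T. \<bar>dl B v\<bar>)"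
      using finT B0(1) by (intro member_le_sum) auto
    then show ?thesis using a0 a1 a2 True by simp
  qed
  define S where "S = e \<inter> \<Union>(\<Union>T)"
  have SV: "S \<subseteq> V" unfolding S_def using Esub eE by blast
  have finS: "finite S" using SV finV finite_subset by blast
  have i1: "(\<Sum>v\<in>V. \<bar>dl NB v\<bar> + (if v \<in> S then 2 else 0)) \<le> (\<Sum>v\<in>V. \<bar>dl {e} v\<bar> + (\<Sum>B\<in>T. \<bar>dl B v\<bar>))"
    unfolding S_def by (rule sum_mono) (rule pw)
  have i2: "(\<Sum>v\<in>V. \<bar>dl NB v\<bar> + (if v \<in> S then 2 else 0)) = L NB + 2 * int (card S)"
  proof -
    have "(\<Sum>v\<in>V. (if v \<in> S then 2 else 0::int)) = 2 * int (card (V \<inter> S))"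
      using finV by (simp add: sum.If_cases)
    moreover have "V \<inter> S = S" using SV by blast
    ultimately show ?thesis unfolding L_def by (simp add: sum.distrib)
  qed
  have i3: "(\<Sum>v\<in>V. \<bar>dl {e} v\<bar> + (\<Sum>B\<in>T. \<bar>dl B v\<bar>)) = L {e} + (\<Sum>B\<in>T. L B)"
    unfolding L_def by (simp add: sum.distrib sum.swap[of _ T V])
  have i4: "(\<Sum>B\<in>T. L B) \<le> 2 * int (card T)"
  proof -
    have "(\<Sum>B\<in>T. L B) \<le> (\<Sum>B\<in>T. 2)" using P(5) TP by (intro sum_mono) auto
    then show ?thesis by simp
  qed
  have i5: "card T \<le> card S"
  proof -
    define g where "g B = (SOME v. v \<in> e \<inter> \<Union>B)" for B
    have g: "g B \<in> e \<inter> \<Union>B" if "B \<in> T" for B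
    proof -
      have "\<exists>v. v \<in> e \<inter> \<Union>B" using that unfolding T_def by blast
      then show ?thesis unfolding g_def by (rule someI_ex)
    qed
    have "inj_on g T"
    proof (rule inj_onI)
      fix B B' assume BB: "B \<in> T" "B' \<in> T" "g B = g B'"
      have "g B \<in> \<Union>B" using g BB(1) by blast
      moreover have "g B' \<in> \<Union>B'" using g BB(2) by blast
      then have "g B \<in> \<Union>B'" using BB(3) by simp
      ultimately have "\<Union>B \<inter> \<Union>B' \<noteq> {}" by blast
      moreover have "B \<in> P" "B' \<in> P" using BB TP by auto
      ultimately show "B = B'" using P(4) by blast
    qed
    moreover have "g ` T \<subseteq> S" unfolding S_def using g by blast
    ultimately show ?thesis using finS card_inj_on_le by blast
  qed
  have LNB: "L NB \<le> 2" using i1 i2 i3 i4 i5 L_single[OF eE] by linarith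
  have "finite P'" unfolding P'_def using P(1) by simp
  moreover have "\<Union>P' = insert e X"
  proof -
    have "\<Union>T \<union> \<Union>(P - T) = \<Union>P" using TP by blast
    then show ?thesis unfolding P'_def NB_def using P(2) by auto
  qed
  moreover have "\<forall>B\<in>P'. B \<noteq> {}" unfolding P'_def NB_def using P(3) by simp
  moreover have "\<forall>B\<in>P'. \<forall>B'\<in>P'. B \<noteq> B' \<longrightarrow> \<Union>B \<inter> \<Union>B' = {}"
  proof -
    have "\<forall>B\<in>P - T. \<Union>B \<inter> \<Union>NB = {}"
    proof
      fix B assume B: "B \<in> P - T"
      have "\<Union>B \<inter> e = {}" using B unfolding T_def by blast
      moreover have "\<forall>B'\<in>T. \<Union>B \<inter> \<Union>B' = {}"
      proof
        fix B' assume "B' \<in> T"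
        then have "B' \<in> P" "B \<noteq> B'" using B TP by auto
        then show "\<Union>B \<inter> \<Union>B' = {}" using B P(4) by auto
      qed
      ultimately show "\<Union>B \<inter> \<Union>NB = {}" unfolding NB_def by auto
    qed
    note H = this
    show ?thesis
    proof (intro ballI impI)
      fix B B' assume BB: "B \<in> P'" "B' \<in> P'" "B \<noteq> B'"
      show "\<Union>B \<inter> \<Union>B' = {}"
      proof (cases "B = NB")
        case True
        then have "B' \<in> P - T" using BB unfolding P'_def by auto
        then show ?thesis using H True by (simp add: Int_commute)
      next
        case False
        then have B: "B \<in> P - T" using BB unfolding P'_def by auto
        show ?thesis
        proof (cases "B' = NB")
          case True
          then show ?thesis using H B by simp
        next
          case False
          then have "B' \<in> P - T" using BB unfolding P'_def by auto
          then show ?thesis using B BB(3) P(4) by auto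
        qed
      qed
    qed
  qed
  moreover have "\<forall>B\<in>P'. L B \<le> 2" unfolding P'_def using P(5) LNB by auto
  ultimately show ?case by (intro exI[of _ P']) simp
qed

end

context mm begin

lemma subE_fin: "Y \<subseteq> E \<Longrightarrow> finite Y" using finE finite_subset by blast

lemma cnt_fin_match: "is_matching E N \<Longrightarrow> cnt N v = of_bool (v \<in> \<Union>N)"
  unfolding is_matching_def by (intro cnt_matching) (auto intro: subE_fin)

lemma card_as_cnt:
  assumes "is_matching E N" "finite A"
  shows "int (card (A \<inter> \<Union>N)) = (\<Sum>v\<in>A. cnt N v)"
proof -
  have "(\<Sum>v\<in>A. cnt N v) = (\<Sum>v\<in>A. if v \<in> \<Union>N then 1 else 0)"
    using cnt_fin_match[OF assms(1)] by (simp add: of_bool_def)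
  also have "\<dots> = int (card (A \<inter> {v. v \<in> \<Union>N}))"
    using assms(2) by (simp add: sum.If_cases)
  finally show ?thesis by (simp add: Int_def)
qed

definition NQ where "NQ P Q = (M1 \<inter> M2) \<union> (\<Union>Q \<inter> M1) \<union> (\<Union>(P - Q) - M1)"

lemma NQ_matching:
  assumes P: "\<Union>P = D" "\<forall>B\<in>P. \<forall>B'\<in>P. B \<noteq> B' \<longrightarrow> \<Union>B \<inter> \<Union>B' = {}" and Q: "Q \<subseteq> P"
  shows "is_matching E (NQ P Q)"
  unfolding is_matching_def
proof (intro conjI ballI impI)
  have "\<Union>Q \<subseteq> D" "\<Union>(P - Q) \<subseteq> D" using P(1) Q by auto
  then show "NQ P Q \<subseteq> E" using m1 DE unfolding NQ_def is_matching_def by auto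
next
  fix f g assume fg: "f \<in> NQ P Q" "g \<in> NQ P Q" "f \<noteq> g"
  show "f \<inter> g = {}"
  proof (rule ccontr)
    assume ne: "f \<inter> g \<noteq> {}"
    have n1: "\<not> (f \<in> M1 \<and> g \<in> M1)" using m1 ne fg(3) unfolding is_matching_def by blast
    have n2: "\<not> (f \<in> M2 \<and> g \<in> M2)" using m2 ne fg(3) unfolding is_matching_def by blast
    have "\<Union>Q \<subseteq> D" "\<Union>(P - Q) \<subseteq> D" using P(1) Q by auto
    then have inM: "\<forall>h\<in>NQ P Q. h \<in> M1 \<or> h \<in> M2" unfolding NQ_def D_def by auto
    have key: False if a: "a \<in> NQ P Q" "b \<in> NQ P Q" "a \<in> M1" "a \<notin> M2" "b \<in> M2" "b \<notin> M1" "a \<inter> b \<noteq> {}" for a b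
    proof -
      have "a \<in> \<Union>Q" using a unfolding NQ_def by auto
      then obtain B where B: "B \<in> Q" "a \<in> B" by blast
      have "b \<in> \<Union>(P - Q)" using a unfolding NQ_def by auto
      then obtain B' where B': "B' \<in> P - Q" "b \<in> B'" by blast
      have "B \<noteq> B'" using B B' by blast
      moreover obtain x where "x \<in> a" "x \<in> b" using a(7) by blast
      then have "\<Union>B \<inter> \<Union>B' \<noteq> {}" using B B' by blast
      moreover have "B \<in> P" "B' \<in> P" using B B' Q by auto
      ultimately show False using P(2) by blast
    qed
    show False
    proof (cases "f \<in> M1")
      case True
      then have "g \<notin> M1" using n1 by blast
      then have "g \<in> M2" using inM fg by blast
      then have "f \<notin> M2" using n2 by blast
      show False using key[of f g] fg True \<open>g \<notin> M1\<close> \<open>g \<in> M2\<close> \<open>f \<notin> M2\<close> ne by blast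
    next
      case False
      then have "f \<in> M2" using inM fg by blast
      then have "g \<notin> M2" using n2 by blast
      then have "g \<in> M1" using inM fg by blast
      show False using key[of g f] fg False \<open>g \<notin> M2\<close> \<open>g \<in> M1\<close> \<open>f \<in> M2\<close> ne by blast
    qed
  qed
qed


lemma cnt3: "finite C \<Longrightarrow> finite X \<Longrightarrow> finite Y \<Longrightarrow> C \<inter> X = {} \<Longrightarrow> C \<inter> Y = {} \<Longrightarrow> X \<inter> Y = {}
  \<Longrightarrow> cnt (C \<union> X \<union> Y) v = cnt C v + cnt X v + cnt Y v"
proof -
  assume a: "finite C" "finite X" "finite Y" "C \<inter> X = {}" "C \<inter> Y = {}" "X \<inter> Y = {}"
  have "(C \<union> X) \<inter> Y = {}" using a by blast
  then have "cnt (C \<union> X \<union> Y) v = cnt (C \<union> X) v + cnt Y v" using a by (intro cnt_union) auto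
  also have "cnt (C \<union> X) v = cnt C v + cnt X v" using a by (intro cnt_union) auto
  finally show ?thesis .
qed

lemma dl_Union:
  assumes "\<forall>A\<in>Q. finite A" "\<forall>A\<in>Q. \<forall>B\<in>Q. A \<noteq> B \<longrightarrow> A \<inter> B = {}"
  shows "dl (\<Union>Q) v = (\<Sum>B\<in>Q. dl B v)"
proof -
  have "sum (\<lambda>f. if v \<in> f then (if f \<in> M1 then 1 else -1) else (0::int)) (\<Union>Q)
      = (sum \<circ> sum) (\<lambda>f. if v \<in> f then (if f \<in> M1 then 1 else -1) else (0::int)) Q"
    using assms by (rule sum.Union_disjoint)
  then show ?thesis unfolding dl_def by simp
qed

lemma split_pair:
  fixes m :: nat and p :: "nat \<Rightarrow> 'v set"
  assumes parts: "(\<Union>i<m. p i) = V" "disjoint_family_on p {..<m}"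
  shows "\<exists>N1 N2. is_matching E N1 \<and> is_matching E N2 \<and> (\<forall>i<m.
     int (card (p i \<inter> \<Union>N1)) + int (card (p i \<inter> \<Union>N2)) = int (card (p i \<inter> \<Union>M1)) + int (card (p i \<inter> \<Union>M2)) \<and>
     \<bar>int (card (p i \<inter> \<Union>N1)) - int (card (p i \<inter> \<Union>N2))\<bar> \<le> 2)"
proof -
  from components[OF finD subset_refl] obtain P where Pall: "finite P \<and> \<Union>P = D \<and> (\<forall>B\<in>P. B \<noteq> {}) \<and>
     (\<forall>B\<in>P. \<forall>B'\<in>P. B \<noteq> B' \<longrightarrow> \<Union>B \<inter> \<Union>B' = {}) \<and> (\<forall>B\<in>P. L B \<le> 2)" ..
  note P = conjunct1[OF Pall] conjunct1[OF conjunct2[OF Pall]] conjunct1[OF conjunct2[OF conjunct2[OF Pall]]]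
    conjunct1[OF conjunct2[OF conjunct2[OF conjunct2[OF Pall]]]] conjunct2[OF conjunct2[OF conjunct2[OF conjunct2[OF Pall]]]]
  have BD: "\<forall>B\<in>P. B \<subseteq> D" using P(2) by blast
  have finB: "\<forall>B\<in>P. finite B" using BD finD finite_subset by blast
  have edisj: "\<forall>B\<in>P. \<forall>B'\<in>P. B \<noteq> B' \<longrightarrow> B \<inter> B' = {}"
  proof (intro ballI impI)
    fix B B' assume BB: "B \<in> P" "B' \<in> P" "B \<noteq> B'"
    then have d: "\<Union>B \<inter> \<Union>B' = {}" using P(4) by blast
    show "B \<inter> B' = {}"
    proof (rule ccontr)
      assume "B \<inter> B' \<noteq> {}"
      then obtain f where f: "f \<in> B" "f \<in> B'" by blast
      moreover have "f \<noteq> {}" using f BB BD DE edge_ne by blast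
      ultimately show False using d by blast
    qed
  qed
  have pfin: "finite (p i)" if "i < m" for i
    using parts(1) that finV by (metis UN_upper finite_subset lessThan_iff)
  define a where "a B i = (\<Sum>v\<in>p i. dl B v)" for B i
  have l1: "\<forall>B\<in>P. (\<Sum>i<m. \<bar>a B i\<bar>) \<le> 2"
  proof
    fix B assume B: "B \<in> P"
    have "(\<Sum>i<m. \<bar>a B i\<bar>) \<le> (\<Sum>i<m. \<Sum>v\<in>p i. \<bar>dl B v\<bar>)"
      unfolding a_def by (intro sum_mono sum_abs)
    also have "\<dots> = (\<Sum>v\<in>(\<Union>i<m. p i). \<bar>dl B v\<bar>)"
      using parts(2) pfin unfolding disjoint_family_on_def
      by (intro sum.UNION_disjoint[symmetric]) auto
    also have "\<dots> = L B" unfolding parts(1) L_def ..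
    finally have "(\<Sum>i<m. \<bar>a B i\<bar>) \<le> L B" .
    moreover have "L B \<le> 2" using P(5) B by blast
    ultimately show "(\<Sum>i<m. \<bar>a B i\<bar>) \<le> 2" by linarith
  qed
  obtain \<epsilon> where eps: "\<forall>B. \<epsilon> B = 1 \<or> \<epsilon> B = -1" "\<forall>i<m. \<bar>\<Sum>B\<in>P. \<epsilon> B * a B i\<bar> \<le> 2"
    using disc[OF P(1) l1] by blast
  define Q where "Q = {B\<in>P. \<epsilon> B = 1}"
  have QP: "Q \<subseteq> P" unfolding Q_def by auto
  have PQQ: "P - (P - Q) = Q" using QP by auto
  define N1 where "N1 = NQ P Q"
  define N2 where "N2 = NQ P (P - Q)"
  have mN1: "is_matching E N1" unfolding N1_def using NQ_matching[OF P(2) P(4) QP] .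
  have mN2: "is_matching E N2" unfolding N2_def using NQ_matching[OF P(2) P(4)] by auto
  define C where "C = M1 \<inter> M2"
  define A where "A = \<Union>Q"
  define B where "B = \<Union>(P - Q)"
  have AD: "A \<subseteq> D" "B \<subseteq> D" unfolding A_def B_def using QP P(2) by auto
  have "\<Union>Q \<union> \<Union>(P - Q) = \<Union>P" using QP by blast
  then have ABD: "A \<union> B = D" unfolding A_def B_def using P(2) by simp
  have AB: "A \<inter> B = {}"
  proof -
    have "\<forall>X\<in>Q. \<forall>Y\<in>P - Q. X \<inter> Y = {}"
    proof (intro ballI)
      fix X Y assume "X \<in> Q" "Y \<in> P - Q"
      then have "X \<in> P" "Y \<in> P" "X \<noteq> Y" using QP by auto
      then show "X \<inter> Y = {}" using edisj by blast
    qed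
    then show ?thesis unfolding A_def B_def by auto
  qed
  have CD: "C \<inter> D = {}" unfolding C_def D_def by blast
  have "finite A" "finite B" using AD finD by (meson finite_subset)+
  moreover have "C \<subseteq> E" using m1 unfolding C_def is_matching_def by auto
  ultimately have finA: "finite A" "finite B" "finite C" using subE_fin by auto
  have eN1: "N1 = C \<union> (A \<inter> M1) \<union> (B - M1)" unfolding N1_def NQ_def A_def B_def C_def ..
  have eN2: "N2 = C \<union> (B \<inter> M1) \<union> (A - M1)" unfolding N2_def NQ_def A_def B_def C_def PQQ ..
  have eM1: "M1 = C \<union> (A \<inter> M1) \<union> (B \<inter> M1)" using ABD unfolding C_def D_def by auto
  have eM2: "M2 = C \<union> (A - M1) \<union> (B - M1)" using ABD unfolding C_def D_def by auto
  have d1: "C \<inter> (A \<inter> M1) = {}" "C \<inter> (B - M1) = {}" "C \<inter> (B \<inter> M1) = {}" "C \<inter> (A - M1) = {}"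
    using CD AD by auto
  have d2: "(A \<inter> M1) \<inter> (B - M1) = {}" "(B \<inter> M1) \<inter> (A - M1) = {}" "(A \<inter> M1) \<inter> (B \<inter> M1) = {}"
    "(A - M1) \<inter> (B - M1) = {}" using AB by auto
  have f2: "finite (A \<inter> M1)" "finite (B \<inter> M1)" "finite (A - M1)" "finite (B - M1)" using finA by auto
  have cN1: "cnt N1 v = cnt C v + cnt (A \<inter> M1) v + cnt (B - M1) v" for v
    unfolding eN1 using cnt3[of C "A \<inter> M1" "B - M1" v] finA(3) f2 d1 d2 by simp
  have cN2: "cnt N2 v = cnt C v + cnt (B \<inter> M1) v + cnt (A - M1) v" for v
    unfolding eN2 using cnt3[of C "B \<inter> M1" "A - M1" v] finA(3) f2 d1 d2 by simp
  have cM1: "cnt M1 v = cnt C v + cnt (A \<inter> M1) v + cnt (B \<inter> M1) v" for v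
    using cnt3[of C "A \<inter> M1" "B \<inter> M1" v] finA(3) f2 d1 d2 eM1 by simp
  have cM2: "cnt M2 v = cnt C v + cnt (A - M1) v + cnt (B - M1) v" for v
    using cnt3[of C "A - M1" "B - M1" v] finA(3) f2 d1 d2 eM2 by simp
  have dA: "dl A v = (\<Sum>X\<in>Q. dl X v)" for v
    unfolding A_def using finB edisj QP by (intro dl_Union) blast+
  have dB: "dl B v = (\<Sum>X\<in>P - Q. dl X v)" for v
    unfolding B_def using finB edisj by (intro dl_Union) blast+
  have esum: "(\<Sum>X\<in>P. \<epsilon> X * dl X v) = (\<Sum>X\<in>Q. dl X v) - (\<Sum>X\<in>P - Q. dl X v)" for v
  proof -
    have "(\<Sum>X\<in>P. \<epsilon> X * dl X v) = (\<Sum>X\<in>P - Q. \<epsilon> X * dl X v) + (\<Sum>X\<in>Q. \<epsilon> X * dl X v)"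
      using sum.subset_diff[OF QP P(1)] .
    also have "(\<Sum>X\<in>Q. \<epsilon> X * dl X v) = (\<Sum>X\<in>Q. dl X v)"
      unfolding Q_def by (rule sum.cong) auto
    also have "(\<Sum>X\<in>P - Q. \<epsilon> X * dl X v) = (\<Sum>X\<in>P - Q. - dl X v)"
    proof (rule sum.cong[OF refl])
      fix X assume "X \<in> P - Q"
      then have "\<epsilon> X \<noteq> 1" unfolding Q_def by auto
      then have "\<epsilon> X = -1" using eps(1) by metis
      then show "\<epsilon> X * dl X v = - dl X v" by simp
    qed
    finally show ?thesis by (simp add: sum_negf)
  qed
  have diff: "cnt N1 v - cnt N2 v = (\<Sum>X\<in>P. \<epsilon> X * dl X v)" for v
    unfolding esum dA[symmetric] dB[symmetric] dl_cnt[OF finA(1)] dl_cnt[OF finA(2)] cN1 cN2 by simp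
  have sm: "cnt N1 v + cnt N2 v = cnt M1 v + cnt M2 v" for v
    unfolding cN1 cN2 cM1 cM2 by simp
  show ?thesis
  proof (intro exI conjI allI impI)
    fix i assume i: "i < m"
    note cc = card_as_cnt[OF _ pfin[OF i]]
    show "int (card (p i \<inter> \<Union>N1)) + int (card (p i \<inter> \<Union>N2)) = int (card (p i \<inter> \<Union>M1)) + int (card (p i \<inter> \<Union>M2))"
      unfolding cc[OF mN1] cc[OF mN2] cc[OF m1] cc[OF m2] sum.distrib[symmetric] sm ..
    have "int (card (p i \<inter> \<Union>N1)) - int (card (p i \<inter> \<Union>N2)) = (\<Sum>v\<in>p i. \<Sum>X\<in>P. \<epsilon> X * dl X v)"
      unfolding cc[OF mN1] cc[OF mN2] sum_subtractf[symmetric] diff ..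
    also have "\<dots> = (\<Sum>X\<in>P. \<epsilon> X * a X i)"
      unfolding a_def sum_distrib_left by (rule sum.swap)
    finally show "\<bar>int (card (p i \<inter> \<Union>N1)) - int (card (p i \<inter> \<Union>N2))\<bar> \<le> 2"
      using eps(2) i by simp
  qed (use mN1 mN2 in auto)
qed

end

lemma E_fin:
  fixes p :: "'a pmf" and f :: "'a \<Rightarrow> real"
  assumes "finite (set_pmf p)"
  shows "measure_pmf.expectation p f = (\<Sum>a\<in>set_pmf p. pmf p a * f a)"
  using integral_measure_pmf[OF assms, of p f] by simp

lemma E_two:
  fixes f :: "'a \<Rightarrow> real"
  shows "measure_pmf.expectation (pmf_of_set {u, v}) f = (f u + f v) / 2"
proof (cases "u = v")
  case True
  then show ?thesis by (simp add: integral_pmf_of_set)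
next
  case False
  then show ?thesis by (simp add: integral_pmf_of_set)
qed

lemma dbl_sum:
  fixes w f :: "'a \<Rightarrow> real"
  assumes "finite S" "(\<Sum>a\<in>S. w a) = 1"
  shows "(\<Sum>a\<in>S. w a * (\<Sum>b\<in>S. w b * ((f a + f b) / 2))) = (\<Sum>a\<in>S. w a * f a)"
    and "(\<Sum>a\<in>S. w a * (\<Sum>b\<in>S. w b * ((f a + f b)^2 / 4 + 1)))
         = (\<Sum>a\<in>S. w a * (f a)^2) / 2 + (\<Sum>a\<in>S. w a * f a)^2 / 2 + 1"
proof -
  let ?W = "\<Sum>a\<in>S. w a" and ?X = "\<Sum>a\<in>S. w a * f a" and ?Y = "\<Sum>a\<in>S. w a * (f a)^2"
  have i1: "(\<Sum>b\<in>S. w b * ((f a + f b) / 2)) = f a * ?W / 2 + ?X / 2" for a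
  proof -
    have "(\<Sum>b\<in>S. w b * ((f a + f b) / 2)) = (\<Sum>b\<in>S. (f a / 2) * w b + (1/2) * (w b * f b))"
      by (rule sum.cong) (auto simp: algebra_simps)
    also have "\<dots> = (f a / 2) * ?W + (1/2) * ?X"
      by (simp add: sum.distrib sum_distrib_left)
    finally show ?thesis by simp
  qed
  have "(\<Sum>a\<in>S. w a * (\<Sum>b\<in>S. w b * ((f a + f b) / 2))) = (\<Sum>a\<in>S. (?W/2) * (w a * f a) + (?X/2) * w a)"
    unfolding i1 by (rule sum.cong) (auto simp: algebra_simps)
  also have "\<dots> = (?W/2) * ?X + (?X/2) * ?W" by (simp add: sum.distrib sum_distrib_left)
  finally show "(\<Sum>a\<in>S. w a * (\<Sum>b\<in>S. w b * ((f a + f b) / 2))) = ?X" using assms(2) by simp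
  have i2: "(\<Sum>b\<in>S. w b * ((f a + f b)^2 / 4 + 1)) = (f a)^2 * ?W / 4 + f a * ?X / 2 + ?Y / 4 + ?W" for a
  proof -
    have "(\<Sum>b\<in>S. w b * ((f a + f b)^2 / 4 + 1)) = (\<Sum>b\<in>S. ((f a)^2/4) * w b + (f a / 2) * (w b * f b) + (1/4) * (w b * (f b)^2) + w b)"
      by (rule sum.cong) (auto simp: algebra_simps power2_eq_square)
    also have "\<dots> = ((f a)^2/4) * ?W + (f a / 2) * ?X + (1/4) * ?Y + ?W"
      by (simp add: sum.distrib sum_distrib_left)
    finally show ?thesis by simp
  qed
  have "(\<Sum>a\<in>S. w a * (\<Sum>b\<in>S. w b * ((f a + f b)^2 / 4 + 1)))
     = (\<Sum>a\<in>S. (?W/4) * (w a * (f a)^2) + (?X/2) * (w a * f a) + (?Y/4 + ?W) * w a)"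
    unfolding i2 by (rule sum.cong) (auto simp: algebra_simps)
  also have "\<dots> = (?W/4) * ?Y + (?X/2) * ?X + (?Y/4 + ?W) * ?W" by (simp add: sum.distrib sum_distrib_left)
  finally show "(\<Sum>a\<in>S. w a * (\<Sum>b\<in>S. w b * ((f a + f b)^2 / 4 + 1))) = ?Y / 2 + ?X^2 / 2 + 1"
    using assms(2) by (simp add: power2_eq_square)
qed

lemma prob_core:
  fixes p :: "'a pmf" and x :: "'a \<Rightarrow> real" and N :: "'a \<Rightarrow> 'a \<Rightarrow> 'a \<times> 'a"
  assumes fin: "finite (set_pmf p)"
   and h: "\<forall>a\<in>set_pmf p. \<forall>b\<in>set_pmf p. x (fst (N a b)) + x (snd (N a b)) = x a + x b \<and>
             \<bar>x (fst (N a b)) - x (snd (N a b))\<bar> \<le> 2"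
  shows "measure_pmf.variance (p \<bind> (\<lambda>a. p \<bind> (\<lambda>b. pmf_of_set {fst (N a b), snd (N a b)}))) x
           \<le> measure_pmf.variance p x / 2 + 1 \<and>
         measure_pmf.expectation (p \<bind> (\<lambda>a. p \<bind> (\<lambda>b. pmf_of_set {fst (N a b), snd (N a b)}))) x
           = measure_pmf.expectation p x"
proof -
  define S where "S = set_pmf p"
  define w where "w = pmf p"
  define q2 where "q2 a = p \<bind> (\<lambda>b. pmf_of_set {fst (N a b), snd (N a b)})" for a
  define q where "q = p \<bind> q2"
  have finS: "finite S" using fin S_def by simp
  have w1: "(\<Sum>a\<in>S. w a) = 1" unfolding S_def w_def using fin by (intro sum_pmf_eq_1) auto
  have finq2: "finite (set_pmf (q2 a))" for a
    unfolding q2_def using fin by simp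
  have finq: "finite (set_pmf q)" unfolding q_def using fin finq2 by simp
  have Eq: "measure_pmf.expectation q g = (\<Sum>a\<in>S. w a * (\<Sum>b\<in>S. w b * ((g (fst (N a b)) + g (snd (N a b))) / 2)))"
    for g :: "'a \<Rightarrow> real"
  proof -
    have "measure_pmf.expectation q g = (\<Sum>a\<in>S. w a *\<^sub>R measure_pmf.expectation (q2 a) g)"
      unfolding q_def S_def w_def using fin finq2 by (intro pmf_expectation_bind) auto
    also have "\<dots> = (\<Sum>a\<in>S. w a * (\<Sum>b\<in>S. w b * ((g (fst (N a b)) + g (snd (N a b))) / 2)))"
    proof (rule sum.cong[OF refl])
      fix a assume "a \<in> S"
      have "measure_pmf.expectation (q2 a) g
          = (\<Sum>b\<in>S. w b *\<^sub>R measure_pmf.expectation (pmf_of_set {fst (N a b), snd (N a b)}) g)"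
        unfolding q2_def S_def w_def using fin by (intro pmf_expectation_bind) auto
      then show "w a *\<^sub>R measure_pmf.expectation (q2 a) g
          = w a * (\<Sum>b\<in>S. w b * ((g (fst (N a b)) + g (snd (N a b))) / 2))"
        by (simp add: E_two)
    qed
    finally show ?thesis .
  qed
  have Ep: "measure_pmf.expectation p g = (\<Sum>a\<in>S. w a * g a)" for g :: "'a \<Rightarrow> real"
    unfolding S_def w_def by (rule E_fin[OF fin])
  have mean: "measure_pmf.expectation q x = measure_pmf.expectation p x"
  proof -
    have "measure_pmf.expectation q x = (\<Sum>a\<in>S. w a * (\<Sum>b\<in>S. w b * ((x a + x b) / 2)))"
      unfolding Eq using h unfolding S_def by (intro sum.cong refl arg_cong2[where f="(*)"]) auto
    also have "\<dots> = (\<Sum>a\<in>S. w a * x a)" by (rule dbl_sum(1)[OF finS w1])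
    finally show ?thesis unfolding Ep .
  qed
  have pw: "((x (fst (N a b)))\<^sup>2 + (x (snd (N a b)))\<^sup>2) / 2 \<le> (x a + x b)^2 / 4 + 1"
    if "a \<in> S" "b \<in> S" for a b
  proof -
    define y1 where "y1 = x (fst (N a b))"
    define y2 where "y2 = x (snd (N a b))"
    have s: "y1 + y2 = x a + x b" and d: "\<bar>y1 - y2\<bar> \<le> 2"
      using h that unfolding S_def y1_def y2_def by auto
    have "(y1 - y2)^2 \<le> 2^2" using d by (metis abs_le_square_iff abs_numeral)
    moreover have "(y1\<^sup>2 + y2\<^sup>2) / 2 = (y1 + y2)^2 / 4 + (y1 - y2)^2 / 4"
        by (simp add: divide_simps) (simp add: power2_eq_square algebra_simps)
    ultimately have "(y1\<^sup>2 + y2\<^sup>2) / 2 \<le> (y1 + y2)^2 / 4 + 1" by simp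
    then have "(y1\<^sup>2 + y2\<^sup>2) / 2 \<le> (x a + x b)^2 / 4 + 1" using s by simp
    then show ?thesis by (simp add: y1_def y2_def)
  qed
  have sq: "measure_pmf.expectation q (\<lambda>z. (x z)\<^sup>2) \<le>
      (\<Sum>a\<in>S. w a * (x a)^2) / 2 + (\<Sum>a\<in>S. w a * x a)^2 / 2 + 1"
  proof -
    have "measure_pmf.expectation q (\<lambda>z. (x z)\<^sup>2) \<le> (\<Sum>a\<in>S. w a * (\<Sum>b\<in>S. w b * ((x a + x b)^2 / 4 + 1)))"
      unfolding Eq
      by (intro sum_mono mult_left_mono pw) (auto simp: w_def intro!: sum_nonneg mult_nonneg_nonneg)
    also have "\<dots> = (\<Sum>a\<in>S. w a * (x a)^2) / 2 + (\<Sum>a\<in>S. w a * x a)^2 / 2 + 1"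
      by (rule dbl_sum(2)[OF finS w1])
    finally show ?thesis .
  qed
  have vq: "measure_pmf.variance q x = measure_pmf.expectation q (\<lambda>z. (x z)\<^sup>2) - (measure_pmf.expectation q x)\<^sup>2"
    using finq by (intro measure_pmf.variance_eq integrable_measure_pmf_finite)
  have vp: "measure_pmf.variance p x = measure_pmf.expectation p (\<lambda>z. (x z)\<^sup>2) - (measure_pmf.expectation p x)\<^sup>2"
    using fin by (intro measure_pmf.variance_eq integrable_measure_pmf_finite)
  have "measure_pmf.variance q x \<le> measure_pmf.variance p x / 2 + 1"
  proof -
    have e1: "measure_pmf.expectation p (\<lambda>z. (x z)\<^sup>2) = (\<Sum>a\<in>S. w a * (x a)^2)" by (rule Ep)
    have e2: "measure_pmf.expectation p x = (\<Sum>a\<in>S. w a * x a)" by (rule Ep)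
    have e3: "(measure_pmf.expectation q x)\<^sup>2 = (\<Sum>a\<in>S. w a * x a)\<^sup>2" using mean e2 by simp
    have e4: "(measure_pmf.expectation p x)\<^sup>2 = (\<Sum>a\<in>S. w a * x a)\<^sup>2" using e2 by simp
    show ?thesis using vq vp sq e1 e3 e4 by linarith
  qed
  then show ?thesis using mean unfolding q_def q2_def by simp
qed

definition good :: "'v kx_instance \<Rightarrow> 'v set set \<Rightarrow> 'v set set \<Rightarrow> 'v set set \<times> 'v set set \<Rightarrow> bool" where
  "good I M1 M2 N \<longleftrightarrow> is_matching (edges I) (fst N) \<and> is_matching (edges I) (snd N) \<and>
     (\<forall>i<agents I. utility I i (fst N) + utility I i (snd N) = utility I i M1 + utility I i M2 \<and>
        \<bar>utility I i (fst N) - utility I i (snd N)\<bar> \<le> 2)"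

lemma valid_Esub:
  assumes "valid_instance I"
  shows "\<forall>e\<in>edges I. e \<subseteq> verts I \<and> card e = 2"
proof
  fix e assume "e \<in> edges I"
  then obtain u v where "e = {u, v}" "u \<in> verts I" "v \<in> verts I" "u \<noteq> v"
    using assms unfolding valid_instance_def by blast
  then show "e \<subseteq> verts I \<and> card e = 2" by simp
qed

lemma mm_inst:
  assumes "valid_instance I" "is_matching (edges I) M1" "is_matching (edges I) M2"
  shows "mm (edges I) M1 M2 (verts I)"
  using assms valid_Esub[OF assms(1)] unfolding mm_def valid_instance_def by blast

lemma good_ex:
  assumes v: "valid_instance I" and m: "is_matching (edges I) M1" "is_matching (edges I) M2"
  shows "\<exists>N. good I M1 M2 N"
proof -
  interpret mm "edges I" M1 M2 "verts I" by (rule mm_inst[OF v m])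
  have parts: "(\<Union>i<agents I. parts I i) = verts I" "disjoint_family_on (parts I) {..<agents I}"
    using v unfolding valid_instance_def by auto
  obtain N1 N2 where N: "is_matching (edges I) N1" "is_matching (edges I) N2"
    "\<forall>i<agents I.
     int (card (parts I i \<inter> \<Union>N1)) + int (card (parts I i \<inter> \<Union>N2)) = int (card (parts I i \<inter> \<Union>M1)) + int (card (parts I i \<inter> \<Union>M2)) \<and>
     \<bar>int (card (parts I i \<inter> \<Union>N1)) - int (card (parts I i \<inter> \<Union>N2))\<bar> \<le> 2"
    using split_pair[OF parts] by blast
  have "good I M1 M2 (N1, N2)"
    unfolding good_def fst_conv snd_conv
  proof (intro conjI allI impI)
    fix i assume i: "i < agents I"
    note h = N(3)[rule_format, OF i]
    have "card (parts I i \<inter> \<Union>N1) + card (parts I i \<inter> \<Union>N2) = card (parts I i \<inter> \<Union>M1) + card (parts I i \<inter> \<Union>M2)"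
      using h by linarith
    then show "utility I i N1 + utility I i N2 = utility I i M1 + utility I i M2"
      unfolding utility_def by (metis of_nat_add)
    have "real_of_int \<bar>int (card (parts I i \<inter> \<Union>N1)) - int (card (parts I i \<inter> \<Union>N2))\<bar> \<le> 2"
      using h by linarith
    then show "\<bar>utility I i N1 - utility I i N2\<bar> \<le> 2"
      unfolding utility_def by simp
  qed (use N in auto)
  then show ?thesis by blast
qed

theorem lemma2:
  fixes F :: "'v kx_instance \<Rightarrow> 'v set set pmf"
  assumes "mechanism F"
  shows "\<exists>F'. mechanism F' \<and>
    (\<forall>I. valid_instance I \<longrightarrow> (\<forall>i<agents I.
       measure_pmf.variance (F' I) (utility I i)
         \<le> measure_pmf.variance (F I) (utility I i) / 2 + 1 \<and>
       measure_pmf.expectation (F' I) (utility I i)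
         = measure_pmf.expectation (F I) (utility I i)))"
proof -
  define pk where "pk I a b = (SOME N. good I a b N)" for I and a b :: "'v set set"
  define F' where "F' I = F I \<bind> (\<lambda>a. F I \<bind> (\<lambda>b. pmf_of_set {fst (pk I a b), snd (pk I a b)}))" for I
  have pkgood: "good I a b (pk I a b)" if "valid_instance I" "a \<in> set_pmf (F I)" "b \<in> set_pmf (F I)" for I a b
  proof -
    have "is_matching (edges I) a" "is_matching (edges I) b"
      using assms that unfolding mechanism_def by auto
    then show ?thesis unfolding pk_def using good_ex[OF that(1)] by (metis someI_ex)
  qed
  have "mechanism F'"
    unfolding mechanism_def
  proof (intro allI impI ballI)
    fix I :: "'v kx_instance" and M assume v: "valid_instance I" and M: "M \<in> set_pmf (F' I)"
    then obtain a b where ab: "a \<in> set_pmf (F I)" "b \<in> set_pmf (F I)" "M \<in> {fst (pk I a b), snd (pk I a b)}"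
      unfolding F'_def by auto
    then show "is_matching (edges I) M" using pkgood[OF v ab(1,2)] unfolding good_def by auto
  qed
  moreover have "\<forall>I. valid_instance I \<longrightarrow> (\<forall>i<agents I.
       measure_pmf.variance (F' I) (utility I i)
         \<le> measure_pmf.variance (F I) (utility I i) / 2 + 1 \<and>
       measure_pmf.expectation (F' I) (utility I i)
         = measure_pmf.expectation (F I) (utility I i))"
  proof (intro allI impI)
    fix I :: "'v kx_instance" and i assume v: "valid_instance I" and i: "i < agents I"
    have "edges I \<subseteq> Pow (verts I)" using valid_Esub[OF v] by blast
    then have "finite (edges I)" using v unfolding valid_instance_def by (meson finite_Pow_iff finite_subset)
    moreover have "set_pmf (F I) \<subseteq> Pow (edges I)" using assms v unfolding mechanism_def is_matching_def by auto
    ultimately have fin: "finite (set_pmf (F I))" by (meson finite_Pow_iff finite_subset)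
    show "measure_pmf.variance (F' I) (utility I i)
         \<le> measure_pmf.variance (F I) (utility I i) / 2 + 1 \<and>
       measure_pmf.expectation (F' I) (utility I i)
         = measure_pmf.expectation (F I) (utility I i)"
      unfolding F'_def
    proof (rule prob_core[OF fin])
      show "\<forall>a\<in>set_pmf (F I). \<forall>b\<in>set_pmf (F I).
        utility I i (fst (pk I a b)) + utility I i (snd (pk I a b)) = utility I i a + utility I i b \<and>
        \<bar>utility I i (fst (pk I a b)) - utility I i (snd (pk I a b))\<bar> \<le> 2"
        using pkgood[OF v] i unfolding good_def by blast
    qed
  qed
  ultimately show ?thesis by blast
qed

end
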